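(* Let $\{X_t\}_{t\in\mathbb N^+}$ be a real-valued process adapted to a filtration $\{\mathcal F_t\}_{t\in\mathbb N}$ with $\mathcal F_0$ trivial, such that for all $t\in\mathbb N^+$, $\mathbb E[X_t\mid\mathcal F_{t-1}]=\mu$ and $\mathbb E[(X_t-\mu)^2\mid\mathcal F_{t-1}]\le1$. Let $\phi$ be a Catoni-type influence function. For $\Lambda>0$ and $\beta\in(0,1)$ let $$\mathrm{CI}^{\mathsf C}_t(\Lambda,\beta)=\left\{m\in\mathbb R:\ -\frac{t\Lambda^2}{2}-\log(2/\beta)\le\sum_{i=1}^t\phi(\Lambda(X_i-m))\le\frac{t\Lambda^2}{2}+\log(2/\beta)\right\}.$$ Let $\zeta=\sum_{m=1}^\infty m^{-1.4}$ and, for $j\in\mathbb N=\{0,1,2,\dots\}$, let $t_j=2^j$, $\alpha_j=\frac{\alpha/(j+1)^{1.4}}{\zeta}$ and $\Lambda_j=\sqrt{\log(2/\alpha_j)\,2^{1/2-j}}$. Define the stitched sets $\mathrm{CI}^{\mathsf{Cstch}}_t=\mathrm{CI}^{\mathsf C}_t(\Lambda_j,\alpha_j)$ for $t_j\le t<t_{j+1}$, and let $|\mathrm{CI}^{\mathsf{Cstch}}_t|$ denote its width (supremum minus infimum). Then there is a polynomial $q$ such that for every $\alpha\in(0,1)$ and every $t>q(\log(1/\alpha))$, $$\Pr\left[|\mathrm{CI}^{\mathsf{Cstch}}_t|\le6.8\sqrt{\frac{\log\log 2t+0.72\log(10.4/\alpha)}{t}}\right]\ge1-\frac{\alpha}{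\zeta}>1-\alpha/3.$$
   Context: A function $\phi:\mathbb R\to\mathbb R$ is a Catoni-type influence function if it is increasing and $-\log(1-x+x^2/2)\le\phi(x)\le\log(1+x+x^2/2)$ for all $x\in\mathbb R$. *)

theory Defs
  imports "HOL-Probability.Probability" "HOL-Computational_Algebra.Polynomial"
begin

definition catoni_type :: "(real \<Rightarrow> real) \<Rightarrow> bool" where
  "catoni_type \<phi> \<longleftrightarrow> mono \<phi> \<and>
     (\<forall>x. - ln (1 - x + x\<^sup>2 / 2) \<le> \<phi> x \<and> \<phi> x \<le> ln (1 + x + x\<^sup>2 / 2))"

definition CI_C :: "(nat \<Rightarrow> real) \<Rightarrow> (real \<Rightarrow> real) \<Rightarrow> nat \<Rightarrow> real \<Rightarrow> real \<Rightarrow> real set" where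
  "CI_C x \<phi> t \<Lambda> \<beta> = {m. - (real t * \<Lambda>\<^sup>2 / 2) - ln (2 / \<beta>) \<le> (\<Sum>i=1..t. \<phi> (\<Lambda> * (x i - m)))
                          \<and> (\<Sum>i=1..t. \<phi> (\<Lambda> * (x i - m))) \<le> real t * \<Lambda>\<^sup>2 / 2 + ln (2 / \<beta>)}"

definition zeta14 :: real where
  "zeta14 = (\<Sum>m. 1 / (real (Suc m)) powr 1.4)"

definition alpha_j :: "real \<Rightarrow> nat \<Rightarrow> real" where
  "alpha_j \<alpha> j = (\<alpha> / (real j + 1) powr 1.4) / zeta14"

definition Lambda_j :: "real \<Rightarrow> nat \<Rightarrow> real" where
  "Lambda_j \<alpha> j = sqrt (ln (2 / alpha_j \<alpha> j) * 2 powr (1/2 - real j))"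

text \<open>The unique j with 2^j \<le> t < 2^(j+1) (for t \<ge> 1).\<close>
definition stitch_index :: "nat \<Rightarrow> nat" where
  "stitch_index t = (THE j. 2 ^ j \<le> t \<and> t < 2 ^ (j + 1))"

definition CI_stitch :: "(nat \<Rightarrow> real) \<Rightarrow> (real \<Rightarrow> real) \<Rightarrow> real \<Rightarrow> nat \<Rightarrow> real set" where
  "CI_stitch x \<phi> \<alpha> t = CI_C x \<phi> t (Lambda_j \<alpha> (stitch_index t)) (alpha_j \<alpha> (stitch_index t))"

text \<open>Width (supremum minus infimum) in the extended reals: +\<infinity> if unbounded,
  and -\<infinity> (so any upper bound holds) for the empty set.\<close>
definition width :: "real set \<Rightarrow> ereal" where
  "width S = Sup (ereal ` S) - Inf (ereal ` S)"

end

theory Submission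
  imports Defs
begin


context sigma_finite_subalgebra
begin
lemma nn_cond_exp_le_of_real:
  assumes f: "integrable M f" and pos: "\<And>x. f x \<ge> 0"
    and le: "AE x in M. real_cond_exp M F f x \<le> K"
  shows "AE x in M. nn_cond_exp M F (\<lambda>x. ennreal (f x)) x \<le> ennreal K"
proof -
  have fm[measurable]: "f \<in> borel_measurable M" using f by auto
  have z: "(\<lambda>x. ennreal (- f x)) = (\<lambda>x. 0)" using pos by (simp add: ennreal_neg)
  have "AE x in M. 0 = nn_cond_exp M F (\<lambda>x. 0) x"
    by (rule nn_cond_exp_F_meas) auto
  then have z2: "AE x in M. nn_cond_exp M F (\<lambda>x. ennreal (- f x)) x = 0" unfolding z by auto
  have "(\<integral>\<^sup>+ x. 1 * nn_cond_exp M F (\<lambda>x. ennreal (f x)) x \<partial>M) = (\<integral>\<^sup>+ x. 1 * ennreal (f x) \<partial>M)"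
    by (rule nn_cond_exp_intg) auto
  moreover have "(\<integral>\<^sup>+ x. ennreal (f x) \<partial>M) < \<infinity>"
    using f pos unfolding integrable_iff_bounded by simp
  ultimately have fin: "(\<integral>\<^sup>+ x. nn_cond_exp M F (\<lambda>x. ennreal (f x)) x \<partial>M) \<noteq> \<infinity>"
    by simp
  have "AE x in M. nn_cond_exp M F (\<lambda>x. ennreal (f x)) x \<noteq> \<infinity>"
    by (rule nn_integral_PInf_AE[OF _ fin]) simp
  with z2 le show ?thesis
  proof (eventually_elim)
    case (elim x)
    have "real_cond_exp M F f x = enn2real (nn_cond_exp M F (\<lambda>x. ennreal (f x)) x)"
      using elim(1) unfolding real_cond_exp_def by simp
    then have "enn2real (nn_cond_exp M F (\<lambda>x. ennreal (f x)) x) \<le> K"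
      using elim(2) by simp
    then have "ennreal (enn2real (nn_cond_exp M F (\<lambda>x. ennreal (f x)) x)) \<le> ennreal K"
      by (rule ennreal_leI)
    then show ?case using elim(3) by (simp add: ennreal_enn2real_if top.not_eq_extremum split: if_splits)
  qed
qed
end


lemma quad_pos: "0 \<le> 1 + (z::real) + z\<^sup>2 / 2"
proof -
  have "(1+z)\<^sup>2 = 1 + 2*z + z\<^sup>2" by (simp add: power2_eq_square algebra_simps)
  moreover have "0 \<le> (1+z)\<^sup>2" by simp
  ultimately show ?thesis by linarith
qed

lemma step_bound:
  fixes Y :: "'a \<Rightarrow> real"
  assumes P: "prob_space M" and sub: "subalgebra M G"
    and iY: "integrable M Y" and iW: "integrable M (\<lambda>\<omega>. (Y \<omega> - \<nu>)\<^sup>2)"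
    and cY: "AE \<omega> in M. real_cond_exp M G Y \<omega> = \<nu>"
    and cW: "AE \<omega> in M. real_cond_exp M G (\<lambda>\<omega>. (Y \<omega> - \<nu>)\<^sup>2) \<omega> \<le> 1"
  shows "AE \<omega> in M. nn_cond_exp M G (\<lambda>\<omega>. ennreal (1 + \<Lambda> * (Y \<omega> - m) + \<Lambda>\<^sup>2 * (Y \<omega> - m)\<^sup>2 / 2)) \<omega>
           \<le> ennreal (1 + \<Lambda> * (\<nu> - m) + \<Lambda>\<^sup>2 * (1 + (\<nu> - m)\<^sup>2) / 2)"
proof -
  interpret prob_space M by (rule P)
  interpret finite_measure_subalgebra M G by unfold_locales (rule sub)
  define a where "a = 1 - \<Lambda> * m - \<Lambda>\<^sup>2 * (\<nu> - m) * \<nu> + \<Lambda>\<^sup>2 * (\<nu> - m)\<^sup>2 / 2"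
  define b where "b = \<Lambda> + \<Lambda>\<^sup>2 * (\<nu> - m)"
  define c where "c = \<Lambda>\<^sup>2 / 2"
  define W where "W = (\<lambda>\<omega>. (Y \<omega> - \<nu>)\<^sup>2)"
  have Qeq: "(\<lambda>\<omega>. 1 + \<Lambda> * (Y \<omega> - m) + \<Lambda>\<^sup>2 * (Y \<omega> - m)\<^sup>2 / 2) = (\<lambda>\<omega>. a + (b * Y \<omega> + c * W \<omega>))"
    unfolding a_def b_def c_def W_def by (rule ext) (simp add: power2_eq_square field_simps)
  have iW': "integrable M W" using iW unfolding W_def .
  have ia: "integrable M (\<lambda>\<omega>. a)" by simp
  have ibc: "integrable M (\<lambda>\<omega>. b * Y \<omega> + c * W \<omega>)" using iY iW' by auto
  have e1: "AE \<omega> in M. real_cond_exp M G (\<lambda>\<omega>. a + (b * Y \<omega> + c * W \<omega>)) \<omega>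
      = real_cond_exp M G (\<lambda>\<omega>. a) \<omega> + real_cond_exp M G (\<lambda>\<omega>. b * Y \<omega> + c * W \<omega>) \<omega>"
    by (rule real_cond_exp_add[OF ia ibc])
  have e2: "AE \<omega> in M. real_cond_exp M G (\<lambda>\<omega>. a) \<omega> = a"
    by (rule real_cond_exp_F_meas[OF ia]) simp
  have e3: "AE \<omega> in M. real_cond_exp M G (\<lambda>\<omega>. b * Y \<omega> + c * W \<omega>) \<omega>
      = real_cond_exp M G (\<lambda>\<omega>. b * Y \<omega>) \<omega> + real_cond_exp M G (\<lambda>\<omega>. c * W \<omega>) \<omega>"
    by (rule real_cond_exp_add) (use iY iW' in auto)
  have e4: "AE \<omega> in M. real_cond_exp M G (\<lambda>\<omega>. b * Y \<omega>) \<omega> = b * real_cond_exp M G Y \<omega>"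
    by (rule real_cond_exp_cmult[OF iY])
  have e5: "AE \<omega> in M. real_cond_exp M G (\<lambda>\<omega>. c * W \<omega>) \<omega> = c * real_cond_exp M G W \<omega>"
    by (rule real_cond_exp_cmult[OF iW'])
  have c0: "c \<ge> 0" unfolding c_def by simp
  have le: "AE \<omega> in M. real_cond_exp M G (\<lambda>\<omega>. 1 + \<Lambda> * (Y \<omega> - m) + \<Lambda>\<^sup>2 * (Y \<omega> - m)\<^sup>2 / 2) \<omega>
           \<le> 1 + \<Lambda> * (\<nu> - m) + \<Lambda>\<^sup>2 * (1 + (\<nu> - m)\<^sup>2) / 2"
    unfolding Qeq using e1 e2 e3 e4 e5 cY cW
  proof eventually_elim
    case (elim \<omega>)
    have "c * real_cond_exp M G W \<omega> \<le> c * 1"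
      using elim(7) c0 unfolding W_def by (intro mult_left_mono) auto
    have "real_cond_exp M G (\<lambda>\<omega>. a + (b * Y \<omega> + c * W \<omega>)) \<omega> = a + b * \<nu> + c * real_cond_exp M G W \<omega>"
      using elim(1-6) by simp
    also have "\<dots> \<le> a + b * \<nu> + c" using \<open>c * real_cond_exp M G W \<omega> \<le> c * 1\<close> by simp
    also have "a + b * \<nu> + c = 1 + \<Lambda> * (\<nu> - m) + \<Lambda>\<^sup>2 * (1 + (\<nu> - m)\<^sup>2) / 2"
      unfolding a_def b_def c_def by (simp add: power2_eq_square field_simps)
    finally show ?case .
  qed
  have pos: "\<And>\<omega>. 0 \<le> 1 + \<Lambda> * (Y \<omega> - m) + \<Lambda>\<^sup>2 * (Y \<omega> - m)\<^sup>2 / 2"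
    by (metis quad_pos power_mult_distrib)
  have iQ: "integrable M (\<lambda>\<omega>. 1 + \<Lambda> * (Y \<omega> - m) + \<Lambda>\<^sup>2 * (Y \<omega> - m)\<^sup>2 / 2)"
    unfolding Qeq using ia ibc by auto
  show ?thesis by (rule nn_cond_exp_le_of_real[OF iQ pos le])
qed


lemma filt_meas:
  assumes filt: "filtration \<Omega> F" and "i \<le> n" and "f \<in> borel_measurable (F i)"
  shows "f \<in> borel_measurable (F n)"
proof -
  have "subalgebra (F n) (F i)"
    unfolding subalgebra_def using filtration.sets_F_mono[OF filt \<open>i \<le> n\<close>] filtration.space_F[OF filt]
    by auto
  then show ?thesis using measurable_from_subalg assms(3) by blast
qed

lemma mgf_bound:
  fixes Y :: "nat \<Rightarrow> 'a \<Rightarrow> real" and g :: "real \<Rightarrow> real"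
  assumes P: "prob_space M" and sub: "\<And>i. subalgebra M (F i)" and filt: "filtration (space M) F"
    and meas: "\<And>i. i \<ge> 1 \<Longrightarrow> Y i \<in> borel_measurable (F i)"
    and iY: "\<And>i. i \<ge> 1 \<Longrightarrow> integrable M (Y i)"
    and iW: "\<And>i. i \<ge> 1 \<Longrightarrow> integrable M (\<lambda>\<omega>. (Y i \<omega> - \<nu>)\<^sup>2)"
    and cY: "\<And>i. i \<ge> 1 \<Longrightarrow> AE \<omega> in M. real_cond_exp M (F (i - 1)) (Y i) \<omega> = \<nu>"
    and cW: "\<And>i. i \<ge> 1 \<Longrightarrow> AE \<omega> in M. real_cond_exp M (F (i - 1)) (\<lambda>\<omega>. (Y i \<omega> - \<nu>)\<^sup>2) \<omega> \<le> 1"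
    and gm: "g \<in> borel_measurable borel" and gle: "\<And>x. g x \<le> ln (1 + x + x\<^sup>2 / 2)"
  shows "(\<integral>\<^sup>+\<omega>. ennreal (exp (\<Sum>i=1..n. g (\<Lambda> * (Y i \<omega> - m)))) \<partial>M)
          \<le> ennreal ((1 + \<Lambda> * (\<nu> - m) + \<Lambda>\<^sup>2 * (1 + (\<nu> - m)\<^sup>2) / 2) ^ n)"
proof (induction n)
  case 0
  interpret prob_space M by (rule P)
  show ?case by (simp add: emeasure_space_1)
next
  case (Suc n)
  interpret prob_space M by (rule P)
  interpret finite_measure_subalgebra M "F n" by unfold_locales (rule sub)
  define K where "K = 1 + \<Lambda> * (\<nu> - m) + \<Lambda>\<^sup>2 * (1 + (\<nu> - m)\<^sup>2) / 2"
  have K0: "0 \<le> K"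
  proof -
    have "0 \<le> 1 + \<Lambda> * (\<nu> - m) + (\<Lambda> * (\<nu> - m))\<^sup>2 / 2" by (rule quad_pos)
    moreover have "0 \<le> \<Lambda>\<^sup>2 / 2" by simp
    moreover have "K = (1 + \<Lambda> * (\<nu> - m) + (\<Lambda> * (\<nu> - m))\<^sup>2 / 2) + \<Lambda>\<^sup>2 / 2"
      unfolding K_def power_mult_distrib by (simp add: distrib_left add_divide_distrib)
    ultimately show ?thesis by linarith
  qed
  define Pn where "Pn = (\<lambda>\<omega>. exp (\<Sum>i=1..n. g (\<Lambda> * (Y i \<omega> - m))))"
  define Q where "Q = (\<lambda>\<omega>. 1 + \<Lambda> * (Y (Suc n) \<omega> - m) + \<Lambda>\<^sup>2 * (Y (Suc n) \<omega> - m)\<^sup>2 / 2)"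
  have Ymeas: "\<And>i. i \<in> {1..n} \<Longrightarrow> Y i \<in> borel_measurable (F n)"
    using filt_meas[OF filt] meas by auto
  have gm': "\<And>i. i \<in> {1..n} \<Longrightarrow> (\<lambda>\<omega>. g (\<Lambda> * (Y i \<omega> - m))) \<in> borel_measurable (F n)"
  proof -
    fix i assume "i \<in> {1..n}"
    then have [measurable]: "Y i \<in> borel_measurable (F n)" by (rule Ymeas)
    note gm[measurable]
    show "(\<lambda>\<omega>. g (\<Lambda> * (Y i \<omega> - m))) \<in> borel_measurable (F n)" by measurable
  qed
  have Pn_meas: "Pn \<in> borel_measurable (F n)"
  proof -
    have [measurable]: "(\<lambda>\<omega>. \<Sum>i=1..n. g (\<Lambda> * (Y i \<omega> - m))) \<in> borel_measurable (F n)"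
      by (rule borel_measurable_sum) (rule gm')
    show ?thesis unfolding Pn_def by measurable
  qed
  have YSm: "Y (Suc n) \<in> borel_measurable M"
    using meas[of "Suc n"] measurable_from_subalg[OF sub] by auto
  have Qm: "(\<lambda>\<omega>. ennreal (Q \<omega>)) \<in> borel_measurable M"
    unfolding Q_def using YSm by measurable
  have gSm: "(\<lambda>\<omega>. g (\<Lambda> * (Y (Suc n) \<omega> - m))) \<in> borel_measurable M"
    using YSm gm by measurable
  have split: "\<And>\<omega>. ennreal (exp (\<Sum>i=1..Suc n. g (\<Lambda> * (Y i \<omega> - m))))
        = ennreal (Pn \<omega>) * ennreal (exp (g (\<Lambda> * (Y (Suc n) \<omega> - m))))"
    unfolding Pn_def by (simp add: exp_add ennreal_mult)
  have gQ: "\<And>\<omega>. exp (g (\<Lambda> * (Y (Suc n) \<omega> - m))) \<le> Q \<omega>"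
  proof -
    fix \<omega>
    define z where "z = \<Lambda> * (Y (Suc n) \<omega> - m)"
    have qp: "0 < 1 + z + z\<^sup>2 / 2"
    proof -
      have "(1+z)\<^sup>2 = 1 + 2*z + z\<^sup>2" by (simp add: power2_eq_square algebra_simps)
      moreover have "0 \<le> (1+z)\<^sup>2" by simp
      ultimately show ?thesis by linarith
    qed
    have "exp (g z) \<le> exp (ln (1 + z + z\<^sup>2 / 2))" using gle[of z] by simp
    also have "\<dots> = 1 + z + z\<^sup>2 / 2" using qp by simp
    also have "\<dots> = Q \<omega>" unfolding Q_def z_def by (simp add: power_mult_distrib)
    finally show "exp (g (\<Lambda> * (Y (Suc n) \<omega> - m))) \<le> Q \<omega>" unfolding z_def .
  qed
  have "(\<integral>\<^sup>+\<omega>. ennreal (exp (\<Sum>i=1..Suc n. g (\<Lambda> * (Y i \<omega> - m)))) \<partial>M)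
      = (\<integral>\<^sup>+\<omega>. ennreal (Pn \<omega>) * ennreal (exp (g (\<Lambda> * (Y (Suc n) \<omega> - m)))) \<partial>M)"
    by (simp only: split)
  also have "\<dots> \<le> (\<integral>\<^sup>+\<omega>. ennreal (Pn \<omega>) * ennreal (Q \<omega>) \<partial>M)"
    by (intro nn_integral_mono mult_left_mono ennreal_leI gQ) simp
  also have "\<dots> = (\<integral>\<^sup>+\<omega>. ennreal (Pn \<omega>) * nn_cond_exp M (F n) (\<lambda>\<omega>. ennreal (Q \<omega>)) \<omega> \<partial>M)"
    by (rule nn_cond_exp_intg[symmetric]) (use Pn_meas Qm in auto)
  also have "\<dots> \<le> (\<integral>\<^sup>+\<omega>. ennreal (Pn \<omega>) * ennreal K \<partial>M)"
  proof (rule nn_integral_mono_AE)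
    have "AE \<omega> in M. nn_cond_exp M (F n) (\<lambda>\<omega>. ennreal (Q \<omega>)) \<omega> \<le> ennreal K"
      unfolding Q_def K_def
      using step_bound[OF P sub[of n] iY[of "Suc n"] iW[of "Suc n"]] cY[of "Suc n"] cW[of "Suc n"]
      by simp
    then show "AE \<omega> in M. ennreal (Pn \<omega>) * nn_cond_exp M (F n) (\<lambda>\<omega>. ennreal (Q \<omega>)) \<omega> \<le> ennreal (Pn \<omega>) * ennreal K"
      by eventually_elim (rule mult_left_mono, auto)
  qed
  also have "\<dots> = (\<integral>\<^sup>+\<omega>. ennreal (Pn \<omega>) \<partial>M) * ennreal K"
    by (rule nn_integral_multc) (use measurable_from_subalg[OF sub Pn_meas] in simp)
  also have "\<dots> \<le> ennreal (K ^ n) * ennreal K"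
    using Suc.IH unfolding Pn_def K_def by (intro mult_right_mono) auto
  also have "\<dots> = ennreal (K ^ Suc n)" using K0 by (simp add: ennreal_mult[symmetric] mult.commute)
  finally show ?case unfolding K_def .
qed


lemma quad_pos_strict: "0 < 1 + (z::real) + z\<^sup>2 / 2"
proof -
  have "(1+z)\<^sup>2 = 1 + 2*z + z\<^sup>2" by (simp add: power2_eq_square algebra_simps)
  moreover have "0 \<le> (1+z)\<^sup>2" by simp
  ultimately show ?thesis by linarith
qed

lemma tail_bound:
  fixes Y :: "nat \<Rightarrow> 'a \<Rightarrow> real" and g :: "real \<Rightarrow> real"
    and \<Lambda> m \<nu> c :: real
  assumes P: "prob_space M" and sub: "\<And>i. subalgebra M (F i)" and filt: "filtration (space M) F"
    and meas: "\<And>i. i \<ge> 1 \<Longrightarrow> Y i \<in> borel_measurable (F i)"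
    and iY: "\<And>i. i \<ge> 1 \<Longrightarrow> integrable M (Y i)"
    and iW: "\<And>i. i \<ge> 1 \<Longrightarrow> integrable M (\<lambda>\<omega>. (Y i \<omega> - \<nu>)\<^sup>2)"
    and cY: "\<And>i. i \<ge> 1 \<Longrightarrow> AE \<omega> in M. real_cond_exp M (F (i - 1)) (Y i) \<omega> = \<nu>"
    and cW: "\<And>i. i \<ge> 1 \<Longrightarrow> AE \<omega> in M. real_cond_exp M (F (i - 1)) (\<lambda>\<omega>. (Y i \<omega> - \<nu>)\<^sup>2) \<omega> \<le> 1"
    and gm: "g \<in> borel_measurable borel" and gle: "\<And>x. g x \<le> ln (1 + x + x\<^sup>2 / 2)"
  defines "K \<equiv> 1 + \<Lambda> * (\<nu> - m) + \<Lambda>\<^sup>2 * (1 + (\<nu> - m)\<^sup>2) / 2"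
  shows "K > 0" and "measure M {\<omega> \<in> space M. real n * ln K + c \<le> (\<Sum>i=1..n. g (\<Lambda> * (Y i \<omega> - m)))} \<le> exp (- c)"
proof -
  interpret prob_space M by (rule P)
  show K0: "K > 0"
  proof -
    have "0 < 1 + \<Lambda> * (\<nu> - m) + (\<Lambda> * (\<nu> - m))\<^sup>2 / 2" by (rule quad_pos_strict)
    moreover have "0 \<le> \<Lambda>\<^sup>2 / 2" by auto
    moreover have "K = (1 + \<Lambda> * (\<nu> - m) + (\<Lambda> * (\<nu> - m))\<^sup>2 / 2) + \<Lambda>\<^sup>2 / 2"
      unfolding K_def power_mult_distrib by (simp add: distrib_left add_divide_distrib)
    ultimately show ?thesis by linarith
  qed
  define S where "S = (\<lambda>\<omega>. \<Sum>i=1..n. g (\<Lambda> * (Y i \<omega> - m)))"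
  define T where "T = real n * ln K + c"
  define A where "A = {\<omega> \<in> space M. T \<le> S \<omega>}"
  have Ym: "\<And>i. i \<in> {1..n} \<Longrightarrow> Y i \<in> borel_measurable M"
    using meas measurable_from_subalg[OF sub] by auto
  have gm': "\<And>i. i \<in> {1..n} \<Longrightarrow> (\<lambda>\<omega>. g (\<Lambda> * (Y i \<omega> - m))) \<in> borel_measurable M"
  proof -
    fix i assume "i \<in> {1..n}"
    then have [measurable]: "Y i \<in> borel_measurable M" by (rule Ym)
    note gm[measurable]
    show "(\<lambda>\<omega>. g (\<Lambda> * (Y i \<omega> - m))) \<in> borel_measurable M" by measurable
  qed
  have Sm[measurable]: "S \<in> borel_measurable M"
    unfolding S_def by (rule borel_measurable_sum) (rule gm')
  have Am[measurable]: "A \<in> sets M" unfolding A_def by measurable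
  have "ennreal (measure M A * exp T) = emeasure M A * ennreal (exp T)"
    by (simp add: emeasure_eq_measure ennreal_mult)
  also have "\<dots> = (\<integral>\<^sup>+\<omega>. ennreal (exp T) * indicator A \<omega> \<partial>M)"
    using Am by (simp add: nn_integral_cmult_indicator mult.commute)
  also have "\<dots> \<le> (\<integral>\<^sup>+\<omega>. ennreal (exp (S \<omega>)) \<partial>M)"
    by (intro nn_integral_mono) (auto simp: A_def indicator_def)
  also have "\<dots> \<le> ennreal (K ^ n)"
    unfolding S_def K_def by (rule mgf_bound[OF P sub filt meas iY iW cY cW gm gle])
  finally have "measure M A * exp T \<le> K ^ n"
    using K0 by (simp add: ennreal_le_iff)
  then have "measure M A \<le> K ^ n / exp T" by (simp add: field_simps)
  also have "K ^ n / exp T = exp (- c)"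
    unfolding T_def using K0 by (simp add: exp_add exp_diff[symmetric] exp_of_nat_mult exp_minus field_simps)
  finally show "measure M {\<omega> \<in> space M. real n * ln K + c \<le> (\<Sum>i=1..n. g (\<Lambda> * (Y i \<omega> - m)))} \<le> exp (- c)"
    unfolding A_def S_def T_def .
qed


lemma width_le_iff:
  "width S \<le> ereal c \<longleftrightarrow> (\<forall>x\<in>S. \<forall>y\<in>S. y - x \<le> c)"
proof (cases "S = {}")
  case True
  then show ?thesis by (simp add: width_def bot_ereal_def top_ereal_def)
next
  case False
  then obtain x0 where x0: "x0 \<in> S" by auto
  show ?thesis
  proof
    assume w: "width S \<le> ereal c"
    show "\<forall>x\<in>S. \<forall>y\<in>S. y - x \<le> c"
    proof (intro ballI)
      fix x y assume xy: "x \<in> S" "y \<in> S"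
      have s: "ereal y \<le> Sup (ereal ` S)" using xy by (intro Sup_upper) auto
      have i: "Inf (ereal ` S) \<le> ereal x" using xy by (intro Inf_lower) auto
      have "ereal y - ereal x \<le> Sup (ereal ` S) - Inf (ereal ` S)"
        using s i by (intro ereal_minus_mono) auto
      also have "\<dots> \<le> ereal c" using w by (simp add: width_def)
      finally show "y - x \<le> c" by simp
    qed
  next
    assume H: "\<forall>x\<in>S. \<forall>y\<in>S. y - x \<le> c"
    have sup_le: "\<And>x. x \<in> S \<Longrightarrow> Sup (ereal ` S) \<le> ereal (x + c)"
      using H by (intro Sup_least) (force simp: algebra_simps)
    have "Sup (ereal ` S) \<ge> ereal x0" using x0 by (intro Sup_upper) auto
    moreover have "Sup (ereal ` S) \<le> ereal (x0 + c)" using sup_le x0 by auto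
    ultimately obtain s where s: "Sup (ereal ` S) = ereal s"
      by (cases "Sup (ereal ` S)") auto
    have "\<And>x. x \<in> S \<Longrightarrow> s - c \<le> x" using sup_le s by fastforce
    then have inf_ge: "ereal (s - c) \<le> Inf (ereal ` S)"
      by (intro Inf_greatest) auto
    have "Inf (ereal ` S) \<le> ereal x0" using x0 by (intro Inf_lower) auto
    then obtain r where r: "Inf (ereal ` S) = ereal r" using inf_ge
      by (cases "Inf (ereal ` S)") auto
    show "width S \<le> ereal c" unfolding width_def s r using inf_ge r by simp
  qed
qed

lemma CI_C_convex:
  assumes "mono \<phi>" "\<Lambda> \<ge> 0" "m1 \<in> CI_C x \<phi> t \<Lambda> \<beta>" "m2 \<in> CI_C x \<phi> t \<Lambda> \<beta>" "m1 \<le> m" "m \<le> m2"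
  shows "m \<in> CI_C x \<phi> t \<Lambda> \<beta>"
proof -
  have a: "(\<Sum>i=1..t. \<phi> (\<Lambda> * (x i - m2))) \<le> (\<Sum>i=1..t. \<phi> (\<Lambda> * (x i - m)))"
    using assms by (intro sum_mono monoD[OF assms(1)] mult_left_mono) auto
  have b: "(\<Sum>i=1..t. \<phi> (\<Lambda> * (x i - m))) \<le> (\<Sum>i=1..t. \<phi> (\<Lambda> * (x i - m1)))"
    using assms by (intro sum_mono monoD[OF assms(1)] mult_left_mono) auto
  show ?thesis using assms(3,4) a b unfolding CI_C_def by auto
qed

lemma width_rat:
  assumes conv: "\<And>a b m. a \<in> S \<Longrightarrow> b \<in> S \<Longrightarrow> a \<le> m \<Longrightarrow> m \<le> b \<Longrightarrow> m \<in> S" and c0: "c \<ge> 0"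
  shows "width S \<le> ereal c \<longleftrightarrow> (\<forall>q1 q2 :: rat. of_rat q1 \<in> S \<and> of_rat q2 \<in> S \<longrightarrow> of_rat q2 - of_rat q1 \<le> c)"
  unfolding width_le_iff
proof (intro iffI allI impI ballI)
  fix q1 q2 :: rat
  assume "\<forall>x\<in>S. \<forall>y\<in>S. y - x \<le> c" "of_rat q1 \<in> S \<and> of_rat q2 \<in> S"
  then show "of_rat q2 - of_rat q1 \<le> c" by auto
next
  fix x y assume H: "\<forall>q1 q2 :: rat. of_rat q1 \<in> S \<and> of_rat q2 \<in> S \<longrightarrow> of_rat q2 - of_rat q1 \<le> c"
    and xy: "x \<in> S" "y \<in> S"
  show "y - x \<le> c"
  proof (rule ccontr)
    assume "\<not> y - x \<le> c"
    define e where "e = (y - x - c) / 2"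
    have e0: "e > 0" and ey: "e \<le> (y - x) / 2" using \<open>\<not> y - x \<le> c\<close> c0 by (auto simp: e_def)
    obtain r1 where r1: "r1 \<in> \<rat>" "x < r1" "r1 < x + e" using Rats_dense_in_real[of x "x + e"] e0 by auto
    obtain r2 where r2: "r2 \<in> \<rat>" "y - e < r2" "r2 < y" using Rats_dense_in_real[of "y - e" y] e0 by auto
    obtain q1 where q1: "r1 = of_rat q1" using r1(1) Rats_cases by blast
    obtain q2 where q2: "r2 = of_rat q2" using r2(1) Rats_cases by blast
    have "r1 \<in> S" using conv[OF xy, of r1] r1 ey by auto
    moreover have "r2 \<in> S" using conv[OF xy, of r2] r2 ey by auto
    ultimately have "r2 - r1 \<le> c" using H q1 q2 by auto
    moreover have "2 * e = y - x - c" by (simp add: e_def)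
    moreover have "r2 - r1 > c" using r1(2,3) r2(2,3) calculation(2) by linarith
    ultimately show False by simp
  qed
qed


lemma fixed_t:
  fixes M :: "'a measure" and F :: "nat \<Rightarrow> 'a measure" and X :: "nat \<Rightarrow> 'a \<Rightarrow> real"
    and \<mu> :: real and \<phi> :: "real \<Rightarrow> real" and t :: nat and \<Lambda> \<beta> \<delta> c :: real
  assumes P: "prob_space M"
    and sub: "\<And>t. subalgebra M (F t)"
    and filt: "filtration (space M) F"
    and meas: "\<And>t. t \<ge> 1 \<Longrightarrow> X t \<in> borel_measurable (F t)"
    and iX: "\<And>t. t \<ge> 1 \<Longrightarrow> integrable M (X t)"
    and iW: "\<And>t. t \<ge> 1 \<Longrightarrow> integrable M (\<lambda>\<omega>. (X t \<omega> - \<mu>)\<^sup>2)"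
    and cX: "\<And>t. t \<ge> 1 \<Longrightarrow> AE \<omega> in M. real_cond_exp M (F (t - 1)) (X t) \<omega> = \<mu>"
    and cW: "\<And>t. t \<ge> 1 \<Longrightarrow> AE \<omega> in M. real_cond_exp M (F (t - 1)) (\<lambda>\<omega>. (X t \<omega> - \<mu>)\<^sup>2) \<omega> \<le> 1"
    and cat: "catoni_type \<phi>"
    and \<Lambda>0: "\<Lambda> \<ge> 0" and \<beta>0: "\<beta> > 0"
    and C: "real t * ln (1 - \<Lambda> * \<delta> + \<Lambda>\<^sup>2 * (1 + \<delta>\<^sup>2) / 2) + 2 * ln (2 / \<beta>) + real t * \<Lambda>\<^sup>2 / 2 \<le> 0"
    and cd: "2 * \<delta> \<le> c" and c0: "c \<ge> 0"
  shows "measure M {\<omega> \<in> space M. width (CI_C (\<lambda>i. X i \<omega>) \<phi> t \<Lambda> \<beta>) \<le> ereal c} \<ge> 1 - \<beta>"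
proof -
  interpret prob_space M by (rule P)
  have mono: "mono \<phi>" and lo: "\<And>x. - ln (1 - x + x\<^sup>2 / 2) \<le> \<phi> x" and up: "\<And>x. \<phi> x \<le> ln (1 + x + x\<^sup>2 / 2)"
    using cat unfolding catoni_type_def by auto
  have \<phi>m[measurable]: "\<phi> \<in> borel_measurable borel" by (rule borel_measurable_mono[OF mono])
  define K where "K = 1 - \<Lambda> * \<delta> + \<Lambda>\<^sup>2 * (1 + \<delta>\<^sup>2) / 2"
  define L where "L = ln (2 / \<beta>)"
  define T where "T = real t * ln K + L"
  define Sm where "Sm = (\<lambda>m \<omega>. \<Sum>i=1..t. \<phi> (\<Lambda> * (X i \<omega> - m)))"
  have XM: "\<And>i. i \<ge> 1 \<Longrightarrow> X i \<in> borel_measurable M"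
    using meas measurable_from_subalg[OF sub] by blast
  have Smm[measurable]: "\<And>m. Sm m \<in> borel_measurable M"
  proof -
    fix m
    have "\<And>i. i \<in> {1..t} \<Longrightarrow> (\<lambda>\<omega>. \<phi> (\<Lambda> * (X i \<omega> - m))) \<in> borel_measurable M"
    proof -
      fix i assume "i \<in> {1..t}"
      then have [measurable]: "X i \<in> borel_measurable M" using XM by auto
      show "(\<lambda>\<omega>. \<phi> (\<Lambda> * (X i \<omega> - m))) \<in> borel_measurable M" by measurable
    qed
    then show "Sm m \<in> borel_measurable M" unfolding Sm_def by (rule borel_measurable_sum)
  qed
  define B1 where "B1 = {\<omega> \<in> space M. T \<le> Sm (\<mu> + \<delta>) \<omega>}"
  define B2 where "B2 = {\<omega> \<in> space M. T \<le> - Sm (\<mu> - \<delta>) \<omega>}"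
  have B1m[measurable]: "B1 \<in> sets M" unfolding B1_def by measurable
  have B2m[measurable]: "B2 \<in> sets M" unfolding B2_def by measurable
  have eL: "exp (- L) = \<beta> / 2" unfolding L_def using \<beta>0 by (simp add: exp_minus)
  have pB1: "measure M B1 \<le> \<beta> / 2"
  proof -
    have "measure M {\<omega> \<in> space M. real t * ln (1 + \<Lambda> * (\<mu> - (\<mu> + \<delta>)) + \<Lambda>\<^sup>2 * (1 + (\<mu> - (\<mu> + \<delta>))\<^sup>2) / 2) + L
        \<le> (\<Sum>i=1..t. \<phi> (\<Lambda> * (X i \<omega> - (\<mu> + \<delta>))))} \<le> exp (- L)"
      by (rule tail_bound(2)[OF P sub filt meas iX iW cX cW \<phi>m up])
    moreover have "1 + \<Lambda> * (\<mu> - (\<mu> + \<delta>)) + \<Lambda>\<^sup>2 * (1 + (\<mu> - (\<mu> + \<delta>))\<^sup>2) / 2 = K"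
      unfolding K_def by simp
    ultimately show ?thesis unfolding B1_def T_def Sm_def eL by simp
  qed
  have pB2: "measure M B2 \<le> \<beta> / 2"
  proof -
    define Y where "Y = (\<lambda>i \<omega>. - X i \<omega>)"
    define g where "g = (\<lambda>x. - \<phi> (- x))"
    have gm: "g \<in> borel_measurable borel" unfolding g_def by measurable
    have gle: "\<And>x. g x \<le> ln (1 + x + x\<^sup>2 / 2)"
    proof -
      fix x
      show "g x \<le> ln (1 + x + x\<^sup>2 / 2)" using lo[of "- x"] unfolding g_def by simp
    qed
    have measY: "\<And>i. i \<ge> 1 \<Longrightarrow> Y i \<in> borel_measurable (F i)"
      unfolding Y_def using meas by measurable
    have iY: "\<And>i. i \<ge> 1 \<Longrightarrow> integrable M (Y i)" unfolding Y_def using iX by auto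
    have Weq: "\<And>i. (\<lambda>\<omega>. (Y i \<omega> - - \<mu>)\<^sup>2) = (\<lambda>\<omega>. (X i \<omega> - \<mu>)\<^sup>2)"
      unfolding Y_def by (rule ext) (simp add: power2_commute)
    have iWY: "\<And>i. i \<ge> 1 \<Longrightarrow> integrable M (\<lambda>\<omega>. (Y i \<omega> - - \<mu>)\<^sup>2)" unfolding Weq using iW .
    have cWY: "\<And>i. i \<ge> 1 \<Longrightarrow> AE \<omega> in M. real_cond_exp M (F (i - 1)) (\<lambda>\<omega>. (Y i \<omega> - - \<mu>)\<^sup>2) \<omega> \<le> 1"
      unfolding Weq using cW .
    have cY: "\<And>i. i \<ge> 1 \<Longrightarrow> AE \<omega> in M. real_cond_exp M (F (i - 1)) (Y i) \<omega> = - \<mu>"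
    proof -
      fix i :: nat assume i: "i \<ge> 1"
      interpret finite_measure_subalgebra M "F (i - 1)" by unfold_locales (rule sub)
      have "AE \<omega> in M. real_cond_exp M (F (i - 1)) (\<lambda>\<omega>. (-1) * X i \<omega>) \<omega> = (-1) * real_cond_exp M (F (i - 1)) (X i) \<omega>"
        by (rule real_cond_exp_cmult[OF iX[OF i]])
      then show "AE \<omega> in M. real_cond_exp M (F (i - 1)) (Y i) \<omega> = - \<mu>"
        using cX[OF i] unfolding Y_def by eventually_elim simp
    qed
    have "measure M {\<omega> \<in> space M. real t * ln (1 + \<Lambda> * (- \<mu> - (\<delta> - \<mu>)) + \<Lambda>\<^sup>2 * (1 + (- \<mu> - (\<delta> - \<mu>))\<^sup>2) / 2) + L
        \<le> (\<Sum>i=1..t. g (\<Lambda> * (Y i \<omega> - (\<delta> - \<mu>))))} \<le> exp (- L)"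
      by (rule tail_bound(2)[OF P sub filt measY iY iWY cY cWY gm gle])
    moreover have "1 + \<Lambda> * (- \<mu> - (\<delta> - \<mu>)) + \<Lambda>\<^sup>2 * (1 + (- \<mu> - (\<delta> - \<mu>))\<^sup>2) / 2 = K"
      unfolding K_def by simp
    moreover have "\<And>\<omega>. (\<Sum>i=1..t. g (\<Lambda> * (Y i \<omega> - (\<delta> - \<mu>)))) = - Sm (\<mu> - \<delta>) \<omega>"
      unfolding g_def Y_def Sm_def by (simp add: sum_negf algebra_simps)
    ultimately show ?thesis unfolding B2_def T_def eL by simp
  qed
  define E where "E = {\<omega> \<in> space M. width (CI_C (\<lambda>i. X i \<omega>) \<phi> t \<Lambda> \<beta>) \<le> ereal c}"
  have conv: "\<And>\<omega> a b m. a \<in> CI_C (\<lambda>i. X i \<omega>) \<phi> t \<Lambda> \<beta> \<Longrightarrow> b \<in> CI_C (\<lambda>i. X i \<omega>) \<phi> t \<Lambda> \<beta> \<Longrightarrow> a \<le> m \<Longrightarrow> m \<le> b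
      \<Longrightarrow> m \<in> CI_C (\<lambda>i. X i \<omega>) \<phi> t \<Lambda> \<beta>"
    using CI_C_convex[OF mono \<Lambda>0] by blast
  have memCI: "\<And>\<omega> m. m \<in> CI_C (\<lambda>i. X i \<omega>) \<phi> t \<Lambda> \<beta> \<longleftrightarrow>
      - (real t * \<Lambda>\<^sup>2 / 2) - L \<le> Sm m \<omega> \<and> Sm m \<omega> \<le> real t * \<Lambda>\<^sup>2 / 2 + L"
    unfolding CI_C_def Sm_def L_def by simp
  have E_eq: "E = {\<omega> \<in> space M. \<forall>q1 q2 :: rat.
       ((- (real t * \<Lambda>\<^sup>2 / 2) - L \<le> Sm (of_rat q1) \<omega> \<and> Sm (of_rat q1) \<omega> \<le> real t * \<Lambda>\<^sup>2 / 2 + L) \<and>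
        (- (real t * \<Lambda>\<^sup>2 / 2) - L \<le> Sm (of_rat q2) \<omega> \<and> Sm (of_rat q2) \<omega> \<le> real t * \<Lambda>\<^sup>2 / 2 + L))
       \<longrightarrow> of_rat q2 - of_rat q1 \<le> c}"
  proof -
    have wr: "\<And>\<omega>. width (CI_C (\<lambda>i. X i \<omega>) \<phi> t \<Lambda> \<beta>) \<le> ereal c \<longleftrightarrow>
      (\<forall>q1 q2 :: rat. of_rat q1 \<in> CI_C (\<lambda>i. X i \<omega>) \<phi> t \<Lambda> \<beta> \<and> of_rat q2 \<in> CI_C (\<lambda>i. X i \<omega>) \<phi> t \<Lambda> \<beta>
         \<longrightarrow> of_rat q2 - of_rat q1 \<le> c)"
      by (rule width_rat[OF _ c0]) (rule conv)
    show ?thesis unfolding E_def by (simp only: wr memCI)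
  qed
  have Em: "E \<in> sets M" unfolding E_eq by measurable
  have GE: "space M - (B1 \<union> B2) \<subseteq> E"
  proof
    fix \<omega> assume \<omega>: "\<omega> \<in> space M - (B1 \<union> B2)"
    then have s1: "Sm (\<mu> + \<delta>) \<omega> < T" and s2: "- Sm (\<mu> - \<delta>) \<omega> < T" and sp: "\<omega> \<in> space M"
      unfolding B1_def B2_def by auto
    have TC: "T \<le> - (real t * \<Lambda>\<^sup>2 / 2) - L" using C unfolding T_def K_def L_def by simp
    have inside: "\<mu> - \<delta> < m \<and> m < \<mu> + \<delta>" if m: "m \<in> CI_C (\<lambda>i. X i \<omega>) \<phi> t \<Lambda> \<beta>" for m
    proof (rule conjI; rule ccontr)
      assume "\<not> \<mu> - \<delta> < m"
      then have "Sm (\<mu> - \<delta>) \<omega> \<le> Sm m \<omega>" unfolding Sm_def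
        using \<Lambda>0 by (intro sum_mono monoD[OF mono] mult_left_mono) auto
      then show False using m s2 TC unfolding memCI by linarith
    next
      assume "\<not> m < \<mu> + \<delta>"
      then have "Sm m \<omega> \<le> Sm (\<mu> + \<delta>) \<omega>" unfolding Sm_def
        using \<Lambda>0 by (intro sum_mono monoD[OF mono] mult_left_mono) auto
      then show False using m s1 TC unfolding memCI by linarith
    qed
    have "\<forall>x\<in>CI_C (\<lambda>i. X i \<omega>) \<phi> t \<Lambda> \<beta>. \<forall>y\<in>CI_C (\<lambda>i. X i \<omega>) \<phi> t \<Lambda> \<beta>. y - x \<le> c"
    proof (intro ballI)
      fix x y assume "x \<in> CI_C (\<lambda>i. X i \<omega>) \<phi> t \<Lambda> \<beta>" "y \<in> CI_C (\<lambda>i. X i \<omega>) \<phi> t \<Lambda> \<beta>"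
      then have "\<mu> - \<delta> < x" "y < \<mu> + \<delta>" using inside by auto
      then show "y - x \<le> c" using cd by linarith
    qed
    then show "\<omega> \<in> E" unfolding E_def width_le_iff using sp by simp
  qed
  have "measure M (B1 \<union> B2) \<le> \<beta>" using measure_Un_le[OF B1m B2m] pB1 pB2 by simp
  then have "measure M (space M - (B1 \<union> B2)) \<ge> 1 - \<beta>" by (simp add: prob_compl)
  also have "\<dots> \<le> measure M E" by (rule finite_measure_mono[OF GE Em])
  finally show ?thesis unfolding E_def .
qed


lemma tele_bounds:
  fixes x :: real assumes x: "x > 0"
  shows "0.4 * (x + 1) powr (-1.4) \<le> x powr (-0.4) - (x + 1) powr (-0.4)"
    and "x powr (-0.4) - (x + 1) powr (-0.4) \<le> 0.4 * x powr (-1.4)"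
proof -
  have der: "\<And>z. x \<le> z \<Longrightarrow> z \<le> x + 1 \<Longrightarrow> DERIV (\<lambda>z. z powr (-0.4)) z :> (-0.4) * z powr (-1.4)"
  proof -
    fix z :: real assume "x \<le> z" "z \<le> x + 1"
    then have "z > 0" using x by linarith
    from has_real_derivative_powr[OF this, of "-0.4"]
    show "DERIV (\<lambda>z. z powr (-0.4)) z :> (-0.4) * z powr (-1.4)" by simp
  qed
  obtain z where z: "x < z" "z < x + 1" and eq: "(x + 1) powr (-0.4) - x powr (-0.4) = (x + 1 - x) * ((-0.4) * z powr (-1.4))"
    using MVT2[of x "x + 1" "\<lambda>z. z powr (-0.4)", OF _ der] by auto
  have eq2: "x powr (-0.4) - (x + 1) powr (-0.4) = 0.4 * z powr (-1.4)" using eq by simp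
  have "(x + 1) powr (-1.4) \<le> z powr (-1.4)" using z x by (intro powr_mono2') auto
  then show "0.4 * (x + 1) powr (-1.4) \<le> x powr (-0.4) - (x + 1) powr (-0.4)" using eq2 by simp
  have "z powr (-1.4) \<le> x powr (-1.4)" using z x by (intro powr_mono2') auto
  then show "x powr (-0.4) - (x + 1) powr (-0.4) \<le> 0.4 * x powr (-1.4)" using eq2 by simp
qed

lemma powr_le_of_pow:
  fixes x b :: real
  assumes "0 < x" "0 \<le> b" "x ^ k \<le> b ^ 5"
  shows "x powr (real k / 5) \<le> b"
proof -
  have "(x powr (real k / 5)) ^ 5 = (x powr (real k / 5)) powr (real 5)"
    using assms(1) by (simp add: powr_realpow)
  also have "\<dots> = x powr (real k)" by (simp add: powr_powr)
  also have "\<dots> = x ^ k" using assms(1) by (simp add: powr_realpow)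
  finally have h: "(x powr (real k / 5)) ^ Suc 4 \<le> b ^ Suc 4" using assms(3) by simp
  show ?thesis by (rule power_le_imp_le_base[OF h assms(2)])
qed

definition zt :: "nat \<Rightarrow> real" where "zt m = 1 / (real (Suc m)) powr 1.4"

lemma zt_eq: "zt m = (real m + 1) powr (-1.4)"
  unfolding zt_def by (simp add: powr_minus_divide add.commute)

lemma tel_lim: "(\<lambda>n. (real n + c) powr (-0.4)) \<longlonglongrightarrow> 0"
proof (rule tendsto_neg_powr)
  show "LIM n sequentially. real n + c :> at_top"
    using filterlim_tendsto_add_at_top[OF tendsto_const filterlim_real_sequentially, of c]
    by (simp add: add.commute)
qed simp

lemma tel_sums: "(\<lambda>n. 2.5 * ((real n + c) powr (-0.4) - (real (Suc n) + c) powr (-0.4))) sums (2.5 * (c powr (-0.4)))"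
proof -
  have "(\<lambda>n. (real n + c) powr (-0.4) - (real (Suc n) + c) powr (-0.4)) sums ((real 0 + c) powr (-0.4) - 0)"
    by (rule telescope_sums'[OF tel_lim])
  then show ?thesis by (intro sums_mult) simp
qed

lemma zeta_facts: "summable zt" "zeta14 = suminf zt" "zeta14 \<le> 3.5" "zeta14 > 3"
proof -
  have zd: "zeta14 = suminf zt" unfolding zeta14_def zt_def ..
  have le1: "\<And>n. zt (Suc n) \<le> 2.5 * ((real n + 1) powr (-0.4) - (real (Suc n) + 1) powr (-0.4))"
  proof -
    fix n
    have "0.4 * (real n + 1 + 1) powr (-1.4) \<le> (real n + 1) powr (-0.4) - (real n + 1 + 1) powr (-0.4)"
      by (rule tele_bounds(1)) simp
    then show "zt (Suc n) \<le> 2.5 * ((real n + 1) powr (-0.4) - (real (Suc n) + 1) powr (-0.4))"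
      unfolding zt_eq by (simp add: add.commute add.left_commute)
  qed
  have zpos: "\<And>n. 0 \<le> zt n" unfolding zt_def by simp
  have s1: "summable (\<lambda>n. zt (Suc n))"
    by (rule summable_comparison_test'[OF sums_summable[OF tel_sums[of 1]]]) (use le1 zpos in auto)
  then show sz: "summable zt" by (simp add: summable_Suc_iff)
  show "zeta14 = suminf zt" by (rule zd)
  have "(\<Sum>n. zt (Suc n)) \<le> 2.5 * (1 powr (-0.4))"
    by (rule sums_le[OF le1 _ tel_sums[of 1]]) (use s1 in auto)
  moreover have "(\<Sum>n. zt (Suc n)) = suminf zt - zt 0" by (rule suminf_split_head[OF sz])
  moreover have "zt 0 = 1" unfolding zt_def by simp
  ultimately show "zeta14 \<le> 3.5" using zd by simp
  have ge1: "\<And>n. 2.5 * ((real n + 4) powr (-0.4) - (real (Suc n) + 4) powr (-0.4)) \<le> zt (n + 3)"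
  proof -
    fix n
    have "(real n + 4) powr (-0.4) - (real n + 4 + 1) powr (-0.4) \<le> 0.4 * (real n + 4) powr (-1.4)"
      by (rule tele_bounds(2)) simp
    then show "2.5 * ((real n + 4) powr (-0.4) - (real (Suc n) + 4) powr (-0.4)) \<le> zt (n + 3)"
      unfolding zt_eq by (simp add: add.commute add.left_commute add.assoc)
  qed
  have "2.5 * (4 powr (-0.4)) \<le> (\<Sum>n. zt (n + 3))"
    by (rule sums_le[OF ge1 tel_sums[of 4]]) (use summable_ignore_initial_segment[OF sz] in auto)
  moreover have "suminf zt = (\<Sum>n. zt (n + 3)) + (\<Sum>i<3. zt i)" by (rule suminf_split_initial_segment[OF sz])
  moreover have "(\<Sum>i<3. zt i) = zt 0 + zt 1 + zt 2" by (simp add: numeral_3_eq_3 numeral_2_eq_2)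
  moreover have "zt 0 = 1" unfolding zt_def by simp
  moreover have "zt 1 \<ge> 0.37"
  proof -
    have "(2::real) powr (real 7 / 5) \<le> 100/37" by (rule powr_le_of_pow) (auto simp: power_divide divide_simps)
    then have "(2::real) powr 1.4 \<le> 100/37" by simp
    moreover have "(2::real) powr 1.4 > 0" by simp
    ultimately show ?thesis unfolding zt_def by (simp add: field_simps)
  qed
  moreover have "zt 2 \<ge> 0.21"
  proof -
    have "(3::real) powr (real 7 / 5) \<le> 100/21" by (rule powr_le_of_pow) (auto simp: power_divide divide_simps)
    then have "(3::real) powr 1.4 \<le> 100/21" by simp
    moreover have "(3::real) powr 1.4 > 0" by simp
    ultimately show ?thesis unfolding zt_def by (simp add: field_simps)
  qed
  moreover have "4 powr (-0.4) \<ge> (0.57::real)"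
  proof -
    have "(4::real) powr (real 2 / 5) \<le> 100/57" by (rule powr_le_of_pow) (auto simp: power_divide divide_simps)
    then have "(4::real) powr 0.4 \<le> 100/57" by simp
    moreover have "(4::real) powr 0.4 > 0" by simp
    ultimately show ?thesis by (simp add: powr_minus_divide field_simps)
  qed
  ultimately show "zeta14 > 3" using zd by simp
qed


lemma u_bound:
  fixes u :: real assumes "sqrt 2 \<le> u" "u \<le> 2 * sqrt 2"
  shows "u + 4 / u \<le> 3 * sqrt 2"
proof -
  have u0: "u > 0" using assms(1) by (smt (verit) real_sqrt_gt_zero)
  have "(u - sqrt 2) * (u - 2 * sqrt 2) \<le> 0"
    using assms by (intro mult_nonneg_nonpos) auto
  then have "u * u - 3 * sqrt 2 * u + 4 \<le> 0"
    by (simp add: algebra_simps)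
  then have "u * u + 4 \<le> 3 * sqrt 2 * u" by linarith
  then have "(u * u + 4) / u \<le> 3 * sqrt 2" using u0 by (simp add: divide_le_eq)
  moreover have "(u * u + 4) / u = u + 4 / u" using u0 by (simp add: field_simps)
  ultimately show ?thesis by simp
qed

lemma arith_core:
  fixes t L w \<eta> :: real
  assumes t0: "t > 0" and L0: "L > 0" and w0: "w > 0"
    and u1: "sqrt 2 \<le> t * w" and u2: "t * w \<le> 2 * sqrt 2"
    and \<eta>0: "0 < \<eta>" "\<eta> \<le> 1/100" and small: "3 * L \<le> \<eta> * t"
  defines "\<Lambda> \<equiv> sqrt (L * w)"
  defines "D \<equiv> \<Lambda> + 2 * L / (t * \<Lambda>)"
  defines "\<delta> \<equiv> (1 + \<eta>) * D"
  shows "t * ln (1 - \<Lambda> * \<delta> + \<Lambda>\<^sup>2 * (1 + \<delta>\<^sup>2) / 2) + 2 * L + t * \<Lambda>\<^sup>2 / 2 \<le> 0"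
    and "(2 * \<delta>)\<^sup>2 \<le> 4 * (1 + \<eta>)\<^sup>2 * (4 + 3 * sqrt 2) * L / t"
    and "\<Lambda> > 0"
proof -
  have Lw: "\<Lambda>\<^sup>2 = L * w" unfolding \<Lambda>_def using L0 w0 by simp
  show \<Lambda>0: "\<Lambda> > 0" unfolding \<Lambda>_def using L0 w0 by simp
  have tLD: "t * \<Lambda> * D = t * \<Lambda>\<^sup>2 + 2 * L"
    unfolding D_def using t0 \<Lambda>0 by (simp add: field_simps power2_eq_square)
  have LD: "\<Lambda> * D = L * w + 2 * L / t"
    unfolding D_def using t0 \<Lambda>0 Lw by (simp add: field_simps power2_eq_square)
  have s2: "sqrt 2 \<le> 3/2" by (rule real_le_lsqrt) (auto simp: power2_eq_square)
  have "L * w \<le> 3 * L / t"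
  proof -
    have "t * w \<le> 3" using u2 s2 by linarith
    then have "w \<le> 3 / t" using t0 by (simp add: field_simps)
    then show ?thesis using mult_left_mono[of w "3 / t" L] L0 by (simp add: mult.commute)
  qed
  then have LD5: "\<Lambda> * D \<le> 5 * L / t" using LD t0 by (simp add: field_simps)
  have "5 * L / t \<le> 5 * \<eta> / 3" using small t0 by (simp add: field_simps)
  then have LDe: "\<Lambda> * D \<le> 5 * \<eta> / 3" using LD5 by linarith
  have e2: "(1 + \<eta>)\<^sup>2 \<le> 6/5"
  proof -
    have "(1 + \<eta>) * (1 + \<eta>) \<le> (101/100) * (101/100)" using \<eta>0 by (intro mult_mono) auto
    then show ?thesis by (simp add: power2_eq_square)
  qed
  have key: "\<Lambda> * D * (1 + \<eta>)\<^sup>2 \<le> 2 * \<eta>"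
  proof -
    have "\<Lambda> * D * (1 + \<eta>)\<^sup>2 \<le> (5 * \<eta> / 3) * (6/5)"
      using LDe e2 \<Lambda>0 \<eta>0 by (intro mult_mono) (auto simp: D_def intro!: add_nonneg_nonneg divide_nonneg_nonneg mult_nonneg_nonneg)
    then show ?thesis by simp
  qed
  define K where "K = 1 - \<Lambda> * \<delta> + \<Lambda>\<^sup>2 * (1 + \<delta>\<^sup>2) / 2"
  have K0: "K > 0"
  proof -
    have "0 < 1 + (- \<Lambda> * \<delta>) + (- \<Lambda> * \<delta>)\<^sup>2 / 2"
    proof -
      have "(1 + (- \<Lambda> * \<delta>))\<^sup>2 = 1 + 2 * (- \<Lambda> * \<delta>) + (- \<Lambda> * \<delta>)\<^sup>2" by (simp add: power2_eq_square algebra_simps)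
      moreover have "0 \<le> (1 + (- \<Lambda> * \<delta>))\<^sup>2" by simp
      ultimately show ?thesis by linarith
    qed
    moreover have "K = (1 + (- \<Lambda> * \<delta>) + (- \<Lambda> * \<delta>)\<^sup>2 / 2) + \<Lambda>\<^sup>2 / 2"
      unfolding K_def by (simp add: power2_eq_square field_simps)
    moreover have "0 \<le> \<Lambda>\<^sup>2 / 2" by simp
    ultimately show ?thesis by linarith
  qed
  have "t * ln K + 2 * L + t * \<Lambda>\<^sup>2 / 2 \<le> t * (K - 1) + 2 * L + t * \<Lambda>\<^sup>2 / 2"
    using ln_le_minus_one[OF K0] t0 by (simp add: mult_left_mono)
  also have "t * (K - 1) + 2 * L + t * \<Lambda>\<^sup>2 / 2 = t * \<Lambda> * D * (- \<eta> + \<Lambda> * D * (1 + \<eta>)\<^sup>2 / 2)"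
  proof -
    have "t * (K - 1) + 2 * L + t * \<Lambda>\<^sup>2 / 2 = - t * \<Lambda> * \<delta> + t * \<Lambda>\<^sup>2 * \<delta>\<^sup>2 / 2 + (t * \<Lambda>\<^sup>2 + 2 * L)"
      unfolding K_def by (simp add: field_simps)
    also have "\<dots> = - t * \<Lambda> * \<delta> + t * \<Lambda>\<^sup>2 * \<delta>\<^sup>2 / 2 + t * \<Lambda> * D" using tLD by simp
    also have "\<dots> = t * \<Lambda> * D * (- \<eta> + \<Lambda> * D * (1 + \<eta>)\<^sup>2 / 2)"
      unfolding \<delta>_def by (simp add: power2_eq_square field_simps)
    finally show ?thesis .
  qed
  also have "\<dots> \<le> 0"
  proof -
    have "t * \<Lambda> * D \<ge> 0" using tLD t0 L0 by (simp add: )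
    moreover have "- \<eta> + \<Lambda> * D * (1 + \<eta>)\<^sup>2 / 2 \<le> 0" using key by simp
    ultimately show ?thesis by (simp add: mult_nonneg_nonpos)
  qed
  finally show "t * ln (1 - \<Lambda> * \<delta> + \<Lambda>\<^sup>2 * (1 + \<delta>\<^sup>2) / 2) + 2 * L + t * \<Lambda>\<^sup>2 / 2 \<le> 0"
    unfolding K_def .
  have D2: "D\<^sup>2 = L * w + 4 * L / t + 4 * L / (t * t * w)"
  proof -
    have "D\<^sup>2 = \<Lambda>\<^sup>2 + 4 * L / t + 4 * L\<^sup>2 / (t\<^sup>2 * \<Lambda>\<^sup>2)"
      unfolding D_def using t0 \<Lambda>0 by (simp add: power2_eq_square field_simps)
    also have "\<dots> = L * w + 4 * L / t + 4 * L / (t * t * w)"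
      unfolding Lw using L0 w0 t0 by (simp add: power2_eq_square field_simps)
    finally show ?thesis .
  qed
  have "D\<^sup>2 = (L / t) * (t * w + 4 / (t * w) + 4)"
    unfolding D2 using t0 w0 by (simp add: field_simps)
  also have "\<dots> \<le> (L / t) * (3 * sqrt 2 + 4)"
    using u_bound[OF u1 u2] L0 t0 by (intro mult_left_mono) auto
  finally have "D\<^sup>2 \<le> (L / t) * (3 * sqrt 2 + 4)" .
  then have "4 * (1 + \<eta>)\<^sup>2 * D\<^sup>2 \<le> 4 * (1 + \<eta>)\<^sup>2 * ((L / t) * (3 * sqrt 2 + 4))"
    by (intro mult_left_mono) auto
  moreover have "(2 * \<delta>)\<^sup>2 = 4 * (1 + \<eta>)\<^sup>2 * D\<^sup>2"
    unfolding \<delta>_def by (simp add: power_mult_distrib)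
  ultimately have "(2 * \<delta>)\<^sup>2 \<le> 4 * (1 + \<eta>)\<^sup>2 * ((L / t) * (3 * sqrt 2 + 4))" by simp
  then show "(2 * \<delta>)\<^sup>2 \<le> 4 * (1 + \<eta>)\<^sup>2 * (4 + 3 * sqrt 2) * L / t"
    by (simp add: field_simps)
qed


lemma ln_le_2sqrt: assumes "(y::real) > 0" shows "ln y \<le> 2 * sqrt y"
proof -
  have "ln (sqrt y) \<le> sqrt y - 1" using assms by (intro ln_le_minus_one) simp
  moreover have "ln (sqrt y) = ln y / 2" using assms by (simp add: ln_sqrt)
  ultimately show ?thesis by simp
qed

lemma ln2_ge: "ln (2::real) \<ge> 1/2"
proof -
  have "ln (1/2::real) \<le> 1/2 - 1" by (rule ln_le_minus_one) simp
  then show ?thesis by (simp add: ln_div)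
qed

lemma ln7_le: "ln (7::real) \<le> 3"
proof -
  have "exp (1::real) \<ge> 2" using exp_ge_add_one_self[of "1::real"] by simp
  then have "exp (1::real) ^ 3 \<ge> 2 ^ 3" by (intro power_mono) auto
  then have "exp (3::real) \<ge> 8" using exp_of_nat_mult[of 3 "1::real"] by simp
  then have "(7::real) \<le> exp 3" by simp
  then have "ln (7::real) \<le> ln (exp 3)" by (subst ln_le_cancel_iff) auto
  then show ?thesis by simp
qed

lemma sqrt2_le: "sqrt 2 \<le> (1.4143::real)"
  by (rule real_le_lsqrt) (auto simp: power2_eq_square)

lemma sqrt2_ge: "sqrt 2 \<ge> (1.4::real)"
  by (rule real_le_rsqrt) (auto simp: power2_eq_square)

lemma bigt:
  fixes t :: real assumes t: "t \<ge> 10^12"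
  shows "132000 + 42000 * ln (ln (2 * t)) \<le> t / 2"
proof -
  have t0: "t > 0" using t by simp
  have l1: "ln (2 * t) > 0" using t by simp
  have "ln (ln (2 * t)) \<le> ln (2 * t) - 1" by (rule ln_le_minus_one[OF l1])
  also have "\<dots> \<le> 2 * sqrt (2 * t)" using ln_le_2sqrt[of "2 * t"] t0 by simp
  also have "\<dots> = 2 * sqrt 2 * sqrt t" by (simp add: real_sqrt_mult)
  also have "\<dots> \<le> 2 * 1.5 * sqrt t" using sqrt2_le t0 by (intro mult_right_mono mult_left_mono) auto
  finally have a: "ln (ln (2 * t)) \<le> 3 * sqrt t" by simp
  have "sqrt t \<ge> sqrt (10^12)" using t by (subst real_sqrt_le_iff) simp
  moreover have "sqrt ((10::real)^12) = 10^6" by (rule real_sqrt_unique) simp_all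
  ultimately have st: "sqrt t \<ge> 10^6" by simp
  have "t = sqrt t * sqrt t" using t0 by simp
  also have "\<dots> \<ge> 10^6 * sqrt t" using st t0 by (intro mult_right_mono) auto
  finally have b: "t \<ge> 10^6 * sqrt t" .
  have b': "1000000 * sqrt t \<le> t" using b by simp
  have t': "1000000000000 \<le> t" using t by simp
  show ?thesis using a b' t' by linarith
qed


lemma stitch_index_prop:
  assumes "t \<ge> 1"
  shows "2 ^ stitch_index t \<le> t \<and> t < 2 ^ (stitch_index t + 1)"
proof -
  have "\<exists>!j. 2 ^ j \<le> t \<and> t < 2 ^ (j + 1)"
  proof (rule ex_ex1I)
    show "\<exists>j. 2 ^ j \<le> t \<and> t < 2 ^ (j + 1)" using ex_power_ivl1[of 2 t] assms by auto
  next
    fix j k :: nat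
    assume j: "2 ^ j \<le> t \<and> t < 2 ^ (j + 1)" and k: "2 ^ k \<le> t \<and> t < 2 ^ (k + 1)"
    show "j = k"
    proof (rule ccontr)
      assume "j \<noteq> k"
      then have "j + 1 \<le> k \<or> k + 1 \<le> j" by auto
      then show False
      proof
        assume "j + 1 \<le> k"
        then have "(2::nat) ^ (j + 1) \<le> 2 ^ k" by (rule power_increasing) simp
        then show False using j k by linarith
      next
        assume "k + 1 \<le> j"
        then have "(2::nat) ^ (k + 1) \<le> 2 ^ j" by (rule power_increasing) simp
        then show False using j k by linarith
      qed
    qed
  qed
  then show ?thesis unfolding stitch_index_def by (rule theI')
qed

lemma params:
  fixes \<alpha> :: real and t :: nat
  assumes \<alpha>: "0 < \<alpha>" "\<alpha> < 1" and t1: "t \<ge> 1"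
    and tbig: "real t > exp (exp 3000) + 10^12 + 60000 * ln (1 / \<alpha>)"
  defines "j \<equiv> stitch_index t"
  defines "\<beta> \<equiv> alpha_j \<alpha> j"
  defines "L \<equiv> ln (2 / \<beta>)"
  defines "w \<equiv> 2 powr (1/2 - real j)"
  defines "\<Lambda> \<equiv> Lambda_j \<alpha> j"
  defines "\<eta> \<equiv> (1/10000 :: real)"
  defines "\<delta> \<equiv> (1 + \<eta>) * (\<Lambda> + 2 * L / (real t * \<Lambda>))"
  defines "c \<equiv> 6.8 * sqrt ((ln (ln (2 * real t)) + 0.72 * ln (10.4 / \<alpha>)) / real t)"
  shows "\<Lambda> \<ge> 0" "\<beta> > 0" "\<beta> \<le> \<alpha> / zeta14" "2 * \<delta> \<le> c" "c \<ge> 0"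
    "real t * ln (1 - \<Lambda> * \<delta> + \<Lambda>\<^sup>2 * (1 + \<delta>\<^sup>2) / 2) + 2 * ln (2 / \<beta>) + real t * \<Lambda>\<^sup>2 / 2 \<le> 0"
proof -
  define x where "x = ln (1 / \<alpha>)"
  have x0: "x > 0" unfolding x_def using \<alpha> by simp
  have z3: "zeta14 > 3" and z35: "zeta14 \<le> 3.5" using zeta_facts by auto
  have texp: "real t \<ge> exp (exp 3000)" and t12: "real t \<ge> 10^12" and tx: "real t \<ge> 60000 * x"
  proof -
    have e0: "exp (exp (3000::real)) > 0" by simp
    have p: "(10::real)^12 > 0" by simp
    show "real t \<ge> exp (exp 3000)" using tbig x0 e0 p unfolding x_def by linarith
    show "real t \<ge> 10^12" using tbig x0 e0 p unfolding x_def by linarith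
    show "real t \<ge> 60000 * x" using tbig x0 e0 p unfolding x_def by linarith
  qed
  have t0: "real t > 0" using t1 by simp
  have jb: "2 ^ j \<le> t" "t < 2 ^ (j + 1)" using stitch_index_prop[OF t1] unfolding j_def by auto
  have jbr: "(2::real) ^ j \<le> real t" "real t < 2 * 2 ^ j"
    using jb by (simp_all add: of_nat_le_iff[symmetric]) (metis of_nat_less_iff of_nat_numeral of_nat_power power_Suc)
  have jp: "(real j + 1) powr 1.4 \<ge> 1" by (simp add: ge_one_powr_ge_zero)
  have \<beta>_eq: "\<beta> = \<alpha> / ((real j + 1) powr 1.4 * zeta14)" unfolding \<beta>_def alpha_j_def by simp
  show \<beta>0: "\<beta> > 0" unfolding \<beta>_eq using \<alpha> z3 jp by simp
  show "\<beta> \<le> \<alpha> / zeta14" unfolding \<beta>_eq using \<alpha> z3 jp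
    by (simp add: divide_le_eq field_simps mult_le_cancel_left1)
  have P0: "(real j + 1) powr 1.4 > 0" by simp
  have L_eq: "L = ln 2 + ln zeta14 + 1.4 * ln (real j + 1) + x"
  proof -
    have "2 / \<beta> = (2 * (real j + 1) powr 1.4 * zeta14) / \<alpha>" unfolding \<beta>_eq by simp
    then have "L = ln (2 * (real j + 1) powr 1.4 * zeta14) - ln \<alpha>"
      unfolding L_def using \<alpha> z3 P0 by (simp add: ln_div)
    also have "ln (2 * (real j + 1) powr 1.4 * zeta14) = ln 2 + ln ((real j + 1) powr 1.4) + ln zeta14"
      using z3 P0 by (simp add: ln_mult)
    also have "ln ((real j + 1) powr 1.4) = 1.4 * ln (real j + 1)" by simp
    finally show ?thesis unfolding x_def using \<alpha> by (simp add: ln_div)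
  qed
  have lnz: "ln zeta14 > 0" using z3 by simp
  have lnj: "ln (real j + 1) \<ge> 0" by simp
  have l20: "ln (2::real) > 0" by simp
  have L0: "L > 0" unfolding L_eq using lnz lnj x0 l20 by linarith
  define LL where "LL = ln (ln (2 * real t))"
  have l2t: "ln (2 * real t) > 0" using t1 by simp
  have LLbig: "LL \<ge> 3000"
  proof -
    have "ln (real t) \<ge> ln (exp (exp 3000))" using texp t0 by (subst ln_le_cancel_iff) auto
    then have "ln (real t) \<ge> exp 3000" by simp
    moreover have "ln (2 * real t) \<ge> ln (real t)" using t0 by (subst ln_le_cancel_iff) auto
    ultimately have "ln (2 * real t) \<ge> exp 3000" by linarith
    then have "ln (ln (2 * real t)) \<ge> ln (exp 3000)" using l2t by (subst ln_le_cancel_iff) auto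
    then show ?thesis unfolding LL_def by simp
  qed
  have Lup: "L \<le> 4.4 + 1.4 * LL + x"
  proof -
    have a: "ln 2 + ln zeta14 \<le> 3"
    proof -
      have "ln 2 + ln zeta14 = ln (2 * zeta14)" using z3 by (simp add: ln_mult)
      also have "\<dots> \<le> ln 7" using z3 z35 by (subst ln_le_cancel_iff) auto
      also have "\<dots> \<le> 3" by (rule ln7_le)
      finally show ?thesis .
    qed
    have "(2::real) ^ (j + 1) \<le> 2 * real t" using jbr(1) by simp
    then have "ln ((2::real) ^ (j + 1)) \<le> ln (2 * real t)" using t0 by (subst ln_le_cancel_iff) auto
    moreover have "ln ((2::real) ^ (j + 1)) = real (j + 1) * ln 2" using ln_realpow[of "2::real" "j+1"] by simp
    ultimately have h1: "(real j + 1) * ln 2 \<le> ln (2 * real t)" by (simp add: add.commute)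
    have "(real j + 1) * 1 \<le> (real j + 1) * (ln 2 * 2)" using ln2_ge by (intro mult_left_mono) auto
    then have h2: "real j + 1 \<le> 2 * ((real j + 1) * ln 2)" by (simp add: mult_ac)
    have "real j + 1 \<le> 2 * ln (2 * real t)" using h1 h2 by linarith
    then have "ln (real j + 1) \<le> ln (2 * ln (2 * real t))" by (subst ln_le_cancel_iff) (use l2t in auto)
    also have "\<dots> = ln 2 + LL" unfolding LL_def using l2t by (simp add: ln_mult)
    also have "\<dots> \<le> 1 + LL" using ln_2_less_1 by simp
    finally have b: "ln (real j + 1) \<le> 1 + LL" .
    show ?thesis unfolding L_eq using a b by linarith
  qed
  have w_eq: "w = sqrt 2 / 2 ^ j" unfolding w_def
    by (simp add: powr_diff powr_half_sqrt powr_realpow)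
  have w0: "w > 0" unfolding w_eq by simp
  have tw1: "sqrt 2 \<le> real t * w" and tw2: "real t * w \<le> 2 * sqrt 2"
  proof -
    define r where "r = real t / 2 ^ j"
    have tw: "real t * w = sqrt 2 * r" unfolding w_eq r_def by simp
    have r1: "1 \<le> r" "r \<le> 2" using jbr unfolding r_def by (simp_all add: field_simps)
    have "sqrt 2 * 1 \<le> sqrt 2 * r" using r1 by (intro mult_left_mono) auto
    then show "sqrt 2 \<le> real t * w" using tw by simp
    have "sqrt 2 * r \<le> sqrt 2 * 2" using r1 by (intro mult_left_mono) auto
    then show "real t * w \<le> 2 * sqrt 2" using tw by simp
  qed
  have small: "3 * L \<le> \<eta> * real t"
  proof -
    have "132000 + 42000 * LL \<le> real t / 2" unfolding LL_def by (rule bigt[OF t12])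
    then show ?thesis using Lup tx unfolding \<eta>_def by linarith
  qed
  have \<Lambda>_eq: "\<Lambda> = sqrt (L * w)" unfolding \<Lambda>_def Lambda_j_def L_def \<beta>_def w_def ..
  have \<eta>0: "0 < \<eta>" "\<eta> \<le> 1/100" unfolding \<eta>_def by auto
  note AC = arith_core[OF t0 L0 w0 tw1 tw2 \<eta>0 small]
  show "\<Lambda> \<ge> 0" unfolding \<Lambda>_eq using L0 w0 by simp
  show "real t * ln (1 - \<Lambda> * \<delta> + \<Lambda>\<^sup>2 * (1 + \<delta>\<^sup>2) / 2) + 2 * ln (2 / \<beta>) + real t * \<Lambda>\<^sup>2 / 2 \<le> 0"
    using AC(1) unfolding \<delta>_def \<Lambda>_eq L_def .
  define R where "R = ln (ln (2 * real t)) + 0.72 * ln (10.4 / \<alpha>)"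
  have R_ge: "R \<ge> LL + 0.72 * x"
  proof -
    have "ln (10.4 / \<alpha>) = ln 10.4 + x" unfolding x_def using \<alpha> by (simp add: ln_div ln_mult)
    moreover have "ln (10.4::real) \<ge> 0" by simp
    ultimately show ?thesis unfolding R_def LL_def by simp
  qed
  define k where "k = 4 * (1 + \<eta>)\<^sup>2 * (4 + 3 * sqrt 2)"
  have k_le: "k \<le> 32.99" unfolding k_def \<eta>_def using sqrt2_le by (simp add: power2_eq_square)
  have "k * L \<le> 32.99 * L" using k_le L0 by (intro mult_right_mono) auto
  also have "\<dots> \<le> 32.99 * (4.4 + 1.4 * LL + x)" using Lup by simp
  also have "\<dots> \<le> 46.24 * R" using R_ge LLbig x0 by (simp add: power2_eq_square)
  finally have kL: "k * L \<le> 46.24 * R" .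
  have "(2 * \<delta>)\<^sup>2 \<le> k * L / real t"
    using AC(2) unfolding \<delta>_def \<Lambda>_eq k_def by simp
  also have "\<dots> \<le> 46.24 * R / real t" by (rule divide_right_mono[OF kL]) (use t0 in simp)
  finally have "2 * \<delta> \<le> sqrt (46.24 * R / real t)" by (rule real_le_rsqrt)
  also have "sqrt (46.24 * R / real t) = sqrt 46.24 * sqrt (R / real t)" by (simp add: real_sqrt_mult[symmetric])
  also have "sqrt (46.24::real) = 6.8" by (rule real_sqrt_unique) (simp_all add: power2_eq_square)
  finally show "2 * \<delta> \<le> c" unfolding c_def R_def by simp
  have "R \<ge> 0" using R_ge LLbig x0 by (simp add: power2_eq_square)
  then show "c \<ge> 0" unfolding c_def R_def using t0 by simp
qed


theorem corollary2:
  fixes M :: "'a measure" and F :: "nat \<Rightarrow> 'a measure" and X :: "nat \<Rightarrow> 'a \<Rightarrow> real"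
    and \<mu> :: real and \<phi> :: "real \<Rightarrow> real"
  assumes "prob_space M"
    and "\<And>t. subalgebra M (F t)"
    and "filtration (space M) F"
    and "sets (F 0) = {{}, space M}"
    and "\<And>t. t \<ge> 1 \<Longrightarrow> X t \<in> borel_measurable (F t)"
    and "\<And>t. t \<ge> 1 \<Longrightarrow> integrable M (X t)"
    and "\<And>t. t \<ge> 1 \<Longrightarrow> integrable M (\<lambda>\<omega>. (X t \<omega> - \<mu>)\<^sup>2)"
    and "\<And>t. t \<ge> 1 \<Longrightarrow> AE \<omega> in M. real_cond_exp M (F (t - 1)) (X t) \<omega> = \<mu>"
    and "\<And>t. t \<ge> 1 \<Longrightarrow> AE \<omega> in M. real_cond_exp M (F (t - 1)) (\<lambda>\<omega>. (X t \<omega> - \<mu>)\<^sup>2) \<omega> \<le> 1"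
    and "catoni_type \<phi>"
  shows "\<exists>q :: real poly. \<forall>\<alpha> (t::nat). 0 < \<alpha> \<and> \<alpha> < 1 \<and> t \<ge> 1 \<and> real t > poly q (ln (1 / \<alpha>)) \<longrightarrow>
           measure M {\<omega> \<in> space M.
              width (CI_stitch (\<lambda>i. X i \<omega>) \<phi> \<alpha> t)
                \<le> ereal (6.8 * sqrt ((ln (ln (2 * real t)) + 0.72 * ln (10.4 / \<alpha>)) / real t))}
             \<ge> 1 - \<alpha> / zeta14
           \<and> 1 - \<alpha> / zeta14 > 1 - \<alpha> / 3"
proof (rule exI[of _ "[:exp (exp 3000) + 10^12, 60000:]"], intro allI impI)
  fix \<alpha> :: real and t :: nat
  assume H: "0 < \<alpha> \<and> \<alpha> < 1 \<and> t \<ge> 1 \<and> real t > poly [:exp (exp 3000) + 10^12, 60000:] (ln (1 / \<alpha>))"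
  then have \<alpha>: "0 < \<alpha>" "\<alpha> < 1" and t1: "t \<ge> 1" by auto
  have tbig: "real t > exp (exp 3000) + 10^12 + 60000 * ln (1 / \<alpha>)"
    using H by (simp add: algebra_simps)
  note PR = params[OF \<alpha> t1 tbig]
  have z3: "zeta14 > 3" using zeta_facts by auto
  have "measure M {\<omega> \<in> space M.
              width (CI_stitch (\<lambda>i. X i \<omega>) \<phi> \<alpha> t)
                \<le> ereal (6.8 * sqrt ((ln (ln (2 * real t)) + 0.72 * ln (10.4 / \<alpha>)) / real t))}
        \<ge> 1 - alpha_j \<alpha> (stitch_index t)"
    unfolding CI_stitch_def
    by (rule fixed_t[OF assms(1,2,3,5,6,7,8,9,10) PR(1) PR(2) PR(6) PR(4) PR(5)])
  moreover have "1 - \<alpha> / zeta14 \<le> 1 - alpha_j \<alpha> (stitch_index t)" using PR(3) by simp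
  moreover have "\<alpha> / zeta14 < \<alpha> / 3" by (rule divide_strict_left_mono) (use z3 \<alpha> in auto)
  ultimately show "measure M {\<omega> \<in> space M.
              width (CI_stitch (\<lambda>i. X i \<omega>) \<phi> \<alpha> t)
                \<le> ereal (6.8 * sqrt ((ln (ln (2 * real t)) + 0.72 * ln (10.4 / \<alpha>)) / real t))}
             \<ge> 1 - \<alpha> / zeta14
           \<and> 1 - \<alpha> / zeta14 > 1 - \<alpha> / 3" by linarith
qed


end
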